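(* Let $m\ge 3$ and let $l_1\le\cdots\le l_m$ be natural numbers with $l_1\ge 2$ and $l_2\ge 4$. Then $[\Theta(l_1,\ldots,l_m)]^2$ is equitably $k$-choosable for every $k\ge m+3$.
   Context: All graphs are finite and simple. $\Theta(l_1,\ldots,l_m)$ denotes the graph consisting of two vertices $u,w$ joined by $m$ internally disjoint paths of lengths $l_1,\ldots,l_m$; the $i$th path is $u, v_{i,1},\ldots,v_{i,l_i-1}, w$. For a graph $H$, $H^2$ has vertex set $V(H)$ with two vertices adjacent iff their distance in $H$ is 1 or 2. A $k$-assignment $L$ assigns to each vertex a set of exactly $k$ colors; an equitable $L$-coloring of $G$ is a proper coloring $f$ with $f(v)\in L(v)$ such that no color is used more than $\lceil |V(G)|/k\rceil$ times; $G$ is equitably $k$-choosable if it has an equitable $L$-coloring for every $k$-assignment $L$. *)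

theory Defs
  imports Complex_Main
begin

(* Simple graphs given by a vertex set V and an adjacency relation E
   (assumed symmetric and irreflexive where relevant). *)

definition square_adj :: "('a \<Rightarrow> 'a \<Rightarrow> bool) \<Rightarrow> 'a \<Rightarrow> 'a \<Rightarrow> bool" where
  "square_adj E x y \<longleftrightarrow> x \<noteq> y \<and> (E x y \<or> (\<exists>z. E x z \<and> E z y))"

definition k_assignment :: "'a set \<Rightarrow> nat \<Rightarrow> ('a \<Rightarrow> 'c set) \<Rightarrow> bool" where
  "k_assignment V k L \<longleftrightarrow> (\<forall>v\<in>V. finite (L v) \<and> card (L v) = k)"

definition equitable_L_coloring ::
  "'a set \<Rightarrow> ('a \<Rightarrow> 'a \<Rightarrow> bool) \<Rightarrow> nat \<Rightarrow> ('a \<Rightarrow> 'c set) \<Rightarrow> ('a \<Rightarrow> 'c) \<Rightarrow> bool" where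
  "equitable_L_coloring V E k L f \<longleftrightarrow>
     (\<forall>v\<in>V. f v \<in> L v) \<and>
     (\<forall>x\<in>V. \<forall>y\<in>V. E x y \<longrightarrow> f x \<noteq> f y) \<and>
     (\<forall>c. card {v\<in>V. f v = c} \<le> nat \<lceil>real (card V) / real k\<rceil>)"

definition equitably_choosable :: "'a set \<Rightarrow> ('a \<Rightarrow> 'a \<Rightarrow> bool) \<Rightarrow> nat \<Rightarrow> 'c itself \<Rightarrow> bool" where
  "equitably_choosable V E k (_ :: 'c itself) \<longleftrightarrow>
     (\<forall>L :: 'a \<Rightarrow> 'c set. k_assignment V k L \<longrightarrow> (\<exists>f. equitable_L_coloring V E k L f))"

(* Theta graphs.  Paths are indexed 0..m-1, lengths given by the list ls
   (ls ! i is the length of the (i+1)-st path). *)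
datatype theta_vertex = TU | TW | TV nat nat

definition theta_vertices :: "nat list \<Rightarrow> theta_vertex set" where
  "theta_vertices ls = {TU, TW} \<union> {TV i j | i j. i < length ls \<and> 1 \<le> j \<and> j < ls ! i}"

definition theta_pt :: "nat list \<Rightarrow> nat \<Rightarrow> nat \<Rightarrow> theta_vertex" where
  "theta_pt ls i j = (if j = 0 then TU else if j = ls ! i then TW else TV i j)"

definition theta_adj :: "nat list \<Rightarrow> theta_vertex \<Rightarrow> theta_vertex \<Rightarrow> bool" where
  "theta_adj ls x y \<longleftrightarrow> (\<exists>i<length ls. \<exists>j<ls ! i.
      (x = theta_pt ls i j \<and> y = theta_pt ls i (Suc j)) \<or>
      (y = theta_pt ls i j \<and> x = theta_pt ls i (Suc j)))"

end

theory Submission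
  imports Defs
begin
lemma ceil_div_nat:
  assumes "k > 0"
  shows "nat \<lceil>real n / real k\<rceil> = (n + k - 1) div k"
proof -
  have "\<lceil>real n / real k\<rceil> = int ((n + k - 1) div k)"
  proof (rule ceiling_unique)
    have h1: "real ((n + k - 1) div k) * real k \<le> real n + real k - 1"
    proof -
      have "(n + k - 1) div k * k \<le> n + k - 1" by (rule div_times_less_eq_dividend)
      hence "real ((n + k - 1) div k * k) \<le> real (n + k - 1)" by linarith
      thus ?thesis using assms by (simp add: of_nat_diff)
    qed
    have h2: "n \<le> (n + k - 1) div k * k"
    proof -
      have "(n + k - 1) mod k < k" using assms by simp
      moreover have "(n + k - 1) div k * k + (n + k - 1) mod k = n + k - 1" by (rule div_mult_mod_eq)
      moreover have "((n + k - 1) div k + 1) * k = (n + k - 1) div k * k + k" by simp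
      ultimately have "n + k - 1 < ((n + k - 1) div k + 1) * k" by linarith
      thus ?thesis using assms by (simp add: algebra_simps)
    qed
    show "real_of_int (int ((n + k - 1) div k)) - 1 < real n / real k"
      using h1 assms by (simp add: field_simps)
    show "real n / real k \<le> real_of_int (int ((n + k - 1) div k))"
    proof -
      have "real n \<le> real ((n + k - 1) div k) * real k" using h2 by (metis of_nat_le_iff of_nat_mult)
      thus ?thesis using assms by (simp add: field_simps)
    qed
  qed
  thus ?thesis by simp
qed

lemma greedy_equitable:
  fixes V :: "'a set" and E :: "'a \<Rightarrow> 'a \<Rightarrow> bool" and L :: "'a \<Rightarrow> 'c set"
    and c :: "'a \<Rightarrow> nat" and dg :: "'a \<Rightarrow> nat"
  assumes fin: "finite V"
    and sym: "\<And>x y. E x y \<Longrightarrow> E y x"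
    and irr: "\<And>x. \<not> E x x"
    and L: "k_assignment V k L"
    and cN: "\<And>v. v \<in> V \<Longrightarrow> c v < N"
    and N: "N \<le> nat \<lceil>real (card V) / real k\<rceil>"
    and size: "\<And>t. card {v\<in>V. c v = t} \<le> k"
    and dg: "\<And>v. dg v = card {x\<in>V. E v x \<and> c v < c x}"
    and srt: "\<And>v. v \<in> V \<Longrightarrow> 1 \<le> dg v \<Longrightarrow> card {y\<in>V. c y = c v \<and> dg v \<le> dg y} + dg v \<le> k"
  shows "\<exists>f. equitable_L_coloring V E k L f"
proof -
  define B where "B = card V"
  define r where "r v = (N - c v) * (B + 1) + (B - dg v)" for v
  have dgB: "dg v \<le> B" for v
    unfolding dg B_def by (rule card_mono[OF fin]) auto
  have key: "S \<subseteq> V \<longrightarrow> (\<exists>f. (\<forall>v\<in>S. f v \<in> L v) \<and> (\<forall>x\<in>S. \<forall>y\<in>S. E x y \<longrightarrow> f x \<noteq> f y)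
       \<and> (\<forall>x\<in>S. \<forall>y\<in>S. x \<noteq> y \<and> c x = c y \<longrightarrow> f x \<noteq> f y))"
    if finS: "finite S" for S
    using finS
      proof (induction S rule: finite_ranking_induct[where f = r])
        case empty thus ?case by simp
      next
        case (insert x S)
        show ?case
        proof
          assume xS: "insert x S \<subseteq> V"
          hence SV: "S \<subseteq> V" and xV: "x \<in> V" by auto
          from insert.IH SV obtain f where
            f1: "\<forall>v\<in>S. f v \<in> L v" and f2: "\<forall>a\<in>S. \<forall>b\<in>S. E a b \<longrightarrow> f a \<noteq> f b"
            and f3: "\<forall>a\<in>S. \<forall>b\<in>S. a \<noteq> b \<and> c a = c b \<longrightarrow> f a \<noteq> f b" by blast
          show "\<exists>f. (\<forall>v\<in>insert x S. f v \<in> L v) \<and> (\<forall>a\<in>insert x S. \<forall>b\<in>insert x S. E a b \<longrightarrow> f a \<noteq> f b)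
             \<and> (\<forall>a\<in>insert x S. \<forall>b\<in>insert x S. a \<noteq> b \<and> c a = c b \<longrightarrow> f a \<noteq> f b)"
          proof (cases "x \<in> S")
            case True
            hence "insert x S = S" by blast
            thus ?thesis using f1 f2 f3 by (intro exI[of _ f]) simp
          next
            case xnS: False
            have cge: "c x \<le> c y" if "y \<in> S" for y
            proof (rule ccontr)
              assume "\<not> c x \<le> c y"
              hence lt: "c y < c x" by simp
              have "c x < N" using cN xV by simp
              hence "N - c x + 1 \<le> N - c y" using lt by simp
              hence "(N - c x + 1) * (B + 1) \<le> (N - c y) * (B + 1)" by (rule mult_right_mono) simp
              hence "r x < r y" unfolding r_def by (simp add: algebra_simps)
              thus False using insert.hyps(2)[OF that] by simp
            qed
            have dge: "dg x \<le> dg y" if "y \<in> S" "c y = c x" for y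
              using insert.hyps(2)[OF that(1)] that(2) dgB[of x] dgB[of y] unfolding r_def by simp
            define X1 where "X1 = {y\<in>V. E x y \<and> c x < c y}"
            define X2 where "X2 = {y\<in>S. c y = c x}"
            define forb where "forb = f ` (X1 \<union> X2)"
            have finX: "finite X1" "finite X2"
              using fin SV unfolding X1_def X2_def by (simp_all add: rev_finite_subset[of V])
            have c1: "card X1 = dg x" unfolding X1_def dg by simp
            have c2: "card X2 + dg x < k"
            proof (cases "dg x = 0")
              case True
              have "X2 \<subseteq> {v\<in>V. c v = c x} - {x}" unfolding X2_def using SV xnS by auto
              hence "card X2 \<le> card ({v\<in>V. c v = c x} - {x})" by (intro card_mono) (use fin in auto)
              also have "\<dots> = card {v\<in>V. c v = c x} - 1" using xV by (subst card_Diff_singleton) (use fin in auto)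
              also have "\<dots> < k" using size[of "c x"] xV
              proof -
                have fx: "finite {v\<in>V. c v = c x}" using fin by simp
                have "{v\<in>V. c v = c x} \<noteq> {}" using xV by blast
                hence "card {v\<in>V. c v = c x} \<ge> 1" using fx by (simp add: Suc_le_eq card_gt_0_iff)
                thus ?thesis using size[of "c x"] by linarith
              qed
              finally show ?thesis using True by simp
            next
              case False
              have "X2 \<subseteq> {y\<in>V. c y = c x \<and> dg x \<le> dg y} - {x}" unfolding X2_def using SV xnS dge by auto
              hence "card X2 \<le> card ({y\<in>V. c y = c x \<and> dg x \<le> dg y} - {x})" by (intro card_mono) (use fin in auto)
              also have "\<dots> = card {y\<in>V. c y = c x \<and> dg x \<le> dg y} - 1" using xV by (subst card_Diff_singleton) (use fin in auto)
              finally have le1: "card X2 \<le> card {y\<in>V. c y = c x \<and> dg x \<le> dg y} - 1" .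
              have fy: "finite {y\<in>V. c y = c x \<and> dg x \<le> dg y}" using fin by simp
              have "x \<in> {y\<in>V. c y = c x \<and> dg x \<le> dg y}" using xV by simp
              hence "card {y\<in>V. c y = c x \<and> dg x \<le> dg y} \<ge> 1" using fy
                by (metis One_nat_def Suc_leI card_gt_0_iff empty_iff)
              hence "card X2 + 1 \<le> card {y\<in>V. c y = c x \<and> dg x \<le> dg y}" using le1 by linarith
              thus ?thesis using srt[OF xV] False by simp
            qed
            have "card forb < k"
            proof -
              have "card forb \<le> card (X1 \<union> X2)" unfolding forb_def by (rule card_image_le) (use finX in simp)
              also have "\<dots> \<le> card X1 + card X2" by (rule card_Un_le)
              finally show ?thesis using c1 c2 by simp
            qed
            moreover have "finite (L x)" "card (L x) = k" using L xV unfolding k_assignment_def by auto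
            ultimately have "\<not> L x \<subseteq> forb" using card_mono[of forb "L x"] finX unfolding forb_def by auto
            then obtain col where col: "col \<in> L x" "col \<notin> forb" by blast
            define g where "g = f(x := col)"
            have gS: "g v = f v" if "v \<in> S" for v using that xnS unfolding g_def by auto
            show ?thesis
            proof (intro exI[of _ g] conjI ballI impI)
              fix v assume "v \<in> insert x S" thus "g v \<in> L v" using f1 col gS unfolding g_def by auto
            next
              fix a b assume ab: "a \<in> insert x S" "b \<in> insert x S" "E a b"
              show "g a \<noteq> g b"
              proof (cases "a = x")
                case True
                hence bx: "b \<noteq> x" using irr ab(3) by auto
                hence bS: "b \<in> S" using ab by auto
                have "b \<in> X1 \<union> X2"
                  using cge[OF bS] ab(3) True SV bS unfolding X1_def X2_def by (auto simp: le_less)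
                thus ?thesis using col True gS[OF bS] bx unfolding forb_def g_def by auto
              next
                case ax: False
                show ?thesis
                proof (cases "b = x")
                  case True
                  hence aS: "a \<in> S" using ab ax by auto
                  have "a \<in> X1 \<union> X2"
                    using cge[OF aS] sym[OF ab(3)] True SV aS unfolding X1_def X2_def by (auto simp: le_less)
                  thus ?thesis using col True gS[OF aS] ax unfolding forb_def g_def by force
                next
                  case False thus ?thesis using f2 ab ax gS by auto
                qed
              qed
            next
              fix a b assume ab: "a \<in> insert x S" "b \<in> insert x S" "a \<noteq> b \<and> c a = c b"
              show "g a \<noteq> g b"
              proof (cases "a = x")
                case True
                hence bS: "b \<in> S" using ab by auto
                have "b \<in> X2" using ab True bS unfolding X2_def by auto
                thus ?thesis using col True gS[OF bS] ab unfolding forb_def g_def by force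
              next
                case ax: False
                show ?thesis
                proof (cases "b = x")
                  case True
                  hence aS: "a \<in> S" using ab ax by auto
                  have "a \<in> X2" using ab True aS unfolding X2_def by auto
                  thus ?thesis using col True gS[OF aS] ax unfolding forb_def g_def by force
                next
                  case False thus ?thesis using f3 ab ax gS by auto
                qed
              qed
            qed
          qed
        qed
      qed
  from key[OF fin] obtain f where f1: "\<forall>v\<in>V. f v \<in> L v" and f2: "\<forall>x\<in>V. \<forall>y\<in>V. E x y \<longrightarrow> f x \<noteq> f y"
    and f3: "\<forall>x\<in>V. \<forall>y\<in>V. x \<noteq> y \<and> c x = c y \<longrightarrow> f x \<noteq> f y" by blast
  have "card {v\<in>V. f v = col} \<le> nat \<lceil>real (card V) / real k\<rceil>" for col
  proof -
    have "inj_on c {v\<in>V. f v = col}" unfolding inj_on_def using f3 by blast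
    moreover have "c ` {v\<in>V. f v = col} \<subseteq> {..<N}" using cN by auto
    ultimately have "card {v\<in>V. f v = col} \<le> card {..<N}" by (meson card_inj_on_le finite_lessThan)
    thus ?thesis using N by simp
  qed
  thus ?thesis unfolding equitable_L_coloring_def using f1 f2 by blast
qed



locale th =
  fixes ls :: "nat list" and k :: nat
  assumes m3: "length ls \<ge> 3"
    and l0: "ls ! 0 \<ge> 2"
    and l4: "\<And>i. 1 \<le> i \<Longrightarrow> i < length ls \<Longrightarrow> ls ! i \<ge> 4"
    and km: "k \<ge> length ls + 3"
begin

abbreviation "m \<equiv> length ls"
abbreviation "l i \<equiv> ls ! i"
abbreviation "pt \<equiv> theta_pt ls"
abbreviation "V \<equiv> theta_vertices ls"
abbreviation "E \<equiv> square_adj (theta_adj ls)"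

lemma l2: "i < m \<Longrightarrow> l i \<ge> 2"
  using l0 l4[of i] by (cases "i = 0") auto

lemma pt_TU[simp]: "pt i a = TU \<longleftrightarrow> a = 0"
  by (auto simp: theta_pt_def)
lemma pt_TW[simp]: "pt i a = TW \<longleftrightarrow> a \<noteq> 0 \<and> a = l i"
  by (auto simp: theta_pt_def)
lemma pt_TV[simp]: "pt i a = TV i' j \<longleftrightarrow> 0 < a \<and> a \<noteq> l i \<and> i = i' \<and> a = j"
  by (auto simp: theta_pt_def)
lemma TU_pt[simp]: "TU = pt i a \<longleftrightarrow> a = 0"
  by (auto simp: theta_pt_def)
lemma TW_pt[simp]: "TW = pt i a \<longleftrightarrow> a \<noteq> 0 \<and> a = l i"
  by (auto simp: theta_pt_def)
lemma TV_pt[simp]: "TV i' j = pt i a \<longleftrightarrow> 0 < a \<and> a \<noteq> l i \<and> i = i' \<and> a = j"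
  by (auto simp: theta_pt_def)
lemma pt_0[simp]: "pt i 0 = TU" by (simp add: theta_pt_def)
lemma pt_l: "i < m \<Longrightarrow> pt i (l i) = TW" using l2[of i] by (simp add: theta_pt_def)
lemma pt_mid: "0 < a \<Longrightarrow> a < l i \<Longrightarrow> pt i a = TV i a" by (simp add: theta_pt_def)

lemma TV_in_V[simp]: "TV i j \<in> V \<longleftrightarrow> i < m \<and> 1 \<le> j \<and> j < l i"
  by (auto simp: theta_vertices_def)
lemma TU_in_V[simp]: "TU \<in> V" by (simp add: theta_vertices_def)
lemma TW_in_V[simp]: "TW \<in> V" by (simp add: theta_vertices_def)

lemma pt_in_V: "i < m \<Longrightarrow> a \<le> l i \<Longrightarrow> pt i a \<in> V"
  by (auto simp: theta_pt_def)

lemma E_sym: "E x y \<Longrightarrow> E y x"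
  unfolding square_adj_def theta_adj_def by blast

lemma E_irr: "\<not> E x x"
  unfolding square_adj_def by blast

lemma pt_same:
  assumes "i < m" "i' < m" "q \<le> l i" "r \<le> l i'" "pt i q = pt i' r"
  shows "(q = 0 \<and> r = 0) \<or> (q = l i \<and> r = l i') \<or> (i = i' \<and> q = r)"
  using assms l2[of i] l2[of i'] by (auto simp: theta_pt_def split: if_splits)

lemma sq_cases:
  assumes "E x y"
  shows "(\<exists>i<m. \<exists>a b. a \<le> l i \<and> b \<le> l i \<and> x = pt i a \<and> y = pt i b \<and> a \<noteq> b \<and> a \<le> b + 2 \<and> b \<le> a + 2)
       \<or> (\<exists>i<m. \<exists>i'<m. x = pt i 1 \<and> y = pt i' 1)
       \<or> (\<exists>i<m. \<exists>i'<m. x = pt i (l i - 1) \<and> y = pt i' (l i' - 1))"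
proof -
  from assms have xy: "x \<noteq> y" and h: "theta_adj ls x y \<or> (\<exists>z. theta_adj ls x z \<and> theta_adj ls z y)"
    unfolding square_adj_def by auto
  have edge: "\<exists>i<m. \<exists>p q. p \<le> l i \<and> q \<le> l i \<and> a = pt i p \<and> b = pt i q \<and> (q = p + 1 \<or> p = q + 1)"
    if "theta_adj ls a b" for a b
    using that unfolding theta_adj_def by (metis Suc_eq_plus1 Suc_leI less_imp_le)
  show ?thesis
  proof (cases "theta_adj ls x y")
    case True
    from edge[OF True] obtain i p q where "i < m" "p \<le> l i" "q \<le> l i" "x = pt i p" "y = pt i q" "q = p + 1 \<or> p = q + 1"
      by blast
    thus ?thesis
      apply - apply (rule disjI1) apply (rule exI[of _ i]) apply (rule conjI, simp)
      apply (rule exI[of _ p], rule exI[of _ q]) by auto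
  next
    case False
    with h obtain z where xz: "theta_adj ls x z" and zy: "theta_adj ls z y" by blast
    from edge[OF xz] obtain i p q where i: "i < m" "p \<le> l i" "q \<le> l i" "x = pt i p" "z = pt i q" "q = p + 1 \<or> p = q + 1"
      by blast
    from edge[OF zy] obtain i' r s where i': "i' < m" "r \<le> l i'" "s \<le> l i'" "z = pt i' r" "y = pt i' s" "s = r + 1 \<or> r = s + 1"
      by blast
    have "(q = 0 \<and> r = 0) \<or> (q = l i \<and> r = l i') \<or> (i = i' \<and> q = r)"
      using pt_same[of i i' q r] i i' by simp
    moreover
    { assume "q = 0 \<and> r = 0"
      hence "p = 1" "s = 1" using i i' by auto
      hence ?thesis using i i' by blast }
    moreover
    { assume "q = l i \<and> r = l i'"
      hence "p = l i - 1" "s = l i' - 1" using i i' by auto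
      hence ?thesis using i i' by blast }
    moreover
    { assume a: "i = i' \<and> q = r"
      have "p \<noteq> s" using xy i i' a by auto
      hence ?thesis using i i' a
        apply - apply (rule disjI1) apply (rule exI[of _ i]) apply (rule conjI, simp)
        apply (rule exI[of _ p], rule exI[of _ s]) by auto }
    ultimately show ?thesis by blast
  qed
qed

lemma nbr_TV:
  assumes "E (TV i j) y" "TV i j \<in> V"
  shows "(\<exists>b. b \<le> l i \<and> y = pt i b \<and> b \<noteq> j \<and> b \<le> j + 2 \<and> j \<le> b + 2)
       \<or> (j = 1 \<and> (\<exists>i'<m. y = pt i' 1)) \<or> (j = l i - 1 \<and> (\<exists>i'<m. y = pt i' (l i' - 1)))"
proof -
  have V: "i < m" "1 \<le> j" "j < l i" using assms(2) by auto
  from sq_cases[OF assms(1)] show ?thesis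
  proof (elim disjE exE conjE)
    fix i0 a b assume h: "i0 < m" "a \<le> l i0" "b \<le> l i0" "TV i j = pt i0 a" "y = pt i0 b" "a \<noteq> b" "a \<le> b + 2" "b \<le> a + 2"
    hence "i0 = i" "a = j" by (metis pt_TV)+
    thus ?thesis using h by blast
  next
    fix i0 i' assume h: "i0 < m" "i' < m" "TV i j = pt i0 1" "y = pt i' 1"
    hence "j = 1" by (metis pt_TV)
    thus ?thesis using h by blast
  next
    fix i0 i' assume h: "i0 < m" "i' < m" "TV i j = pt i0 (l i0 - 1)" "y = pt i' (l i' - 1)"
    hence "i0 = i" "j = l i - 1" by (metis pt_TV)+
    thus ?thesis using h by blast
  qed
qed

lemma nbr_TU:
  assumes "E TU y"
  shows "\<exists>i<m. y = pt i 1 \<or> (2 \<le> l i \<and> y = pt i 2)"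
  using sq_cases[OF assms] l2
proof (elim disjE exE conjE)
  fix i a b assume h: "i < m" "a \<le> l i" "b \<le> l i" "TU = pt i a" "y = pt i b" "a \<noteq> b" "a \<le> b + 2" "b \<le> a + 2"
  hence "a = 0" by simp
  hence "b = 1 \<or> b = 2" using h by auto
  thus ?thesis using h by blast
next
  fix i i' assume "i < m" "i' < m" "TU = pt i 1" "y = pt i' 1"
  thus ?thesis by simp
next
  fix i i' assume "i < m" "i' < m" "TU = pt i (l i - 1)" "y = pt i' (l i' - 1)"
  thus ?thesis using l2[of i] by simp
qed

lemma nbr_TW:
  assumes "E TW y"
  shows "\<exists>i<m. y = pt i (l i - 1) \<or> y = pt i (l i - 2)"
  using sq_cases[OF assms]
proof (elim disjE exE conjE)
  fix i a b assume h: "i < m" "a \<le> l i" "b \<le> l i" "TW = pt i a" "y = pt i b" "a \<noteq> b" "a \<le> b + 2" "b \<le> a + 2"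
  hence "a = l i" by simp
  hence "b = l i - 1 \<or> b = l i - 2" using h by auto
  thus ?thesis using h by blast
next
  fix i i' assume "i < m" "i' < m" "TW = pt i 1" "y = pt i' 1"
  thus ?thesis using l2[of i] by simp
next
  fix i i' assume h: "i < m" "i' < m" "TW = pt i (l i - 1)" "y = pt i' (l i' - 1)"
  have "l i - 1 \<noteq> l i" using l2[OF h(1)] by simp
  thus ?thesis using h(3) by simp
qed

definition inF where "inF x \<longleftrightarrow> x = TU \<or> (\<exists>i. x = TV i 1) \<or> x = TV 1 2 \<or> x = TV 1 3"
definition inW where "inW x \<longleftrightarrow> \<not> inF x \<and> (x = TW \<or> (\<exists>i. x = TV i (l i - 1)) \<or> x = TV 2 (l 2 - 2) \<or> x = TV 2 (l 2 - 3))"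
definition "F0 = {x\<in>V. inF x}"
definition "W0 = {x\<in>V. inW x}"
definition "J = {x\<in>V. \<not> inF x \<and> \<not> inW x}"

lemma J_char:
  assumes "x \<in> J"
  shows "\<exists>i j. x = TV i j \<and> i < m \<and> 2 \<le> j \<and> j + 2 \<le> l i \<and> (i = 1 \<longrightarrow> 4 \<le> j) \<and> (i = 2 \<longrightarrow> j + 4 \<le> l 2)"
proof -
  have x: "x \<in> V" "\<not> inF x" "\<not> inW x" using assms unfolding J_def by auto
  have "x \<noteq> TU" using x unfolding inF_def by auto
  moreover have "x \<noteq> TW" using x unfolding inW_def by auto
  ultimately obtain i j where xij: "x = TV i j" by (cases x) auto
  have v: "i < m" "1 \<le> j" "j < l i" using x xij by auto
  have "j \<noteq> 1" using x xij unfolding inF_def by auto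
  moreover have "j \<noteq> l i - 1" using x xij unfolding inW_def by auto
  moreover have "i = 1 \<longrightarrow> j \<noteq> 2 \<and> j \<noteq> 3" using x xij unfolding inF_def by auto
  moreover have "i = 2 \<longrightarrow> j \<noteq> l 2 - 2 \<and> j \<noteq> l 2 - 3" using x xij unfolding inW_def by auto
  ultimately show ?thesis using v xij by (intro exI[of _ i] exI[of _ j]) auto
qed

lemma J_nbr:
  assumes "x = TV i j" "x \<in> J" "E x y"
  shows "\<exists>b. b \<le> l i \<and> y = pt i b \<and> b \<noteq> j \<and> b \<le> j + 2 \<and> j \<le> b + 2"
proof -
  obtain i' j' where c: "x = TV i' j'" "i' < m" "2 \<le> j'" "j' + 2 \<le> l i'" using J_char[OF assms(2)] by blast
  hence ij: "i' = i" "j' = j" using assms(1) by auto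
  have xV: "TV i j \<in> V" using c ij by auto
  from nbr_TV[OF assms(3)[unfolded assms(1)] xV] c ij show ?thesis by auto
qed

lemma J_deg: assumes "x \<in> J" shows "card {y\<in>V. E x y} \<le> 4"
proof -
  obtain i j where c: "x = TV i j" "i < m" "2 \<le> j" "j + 2 \<le> l i" using J_char[OF assms] by blast
  have "{y\<in>V. E x y} \<subseteq> pt i ` {j - 2, j - 1, j + 1, j + 2}"
  proof
    fix y assume "y \<in> {y\<in>V. E x y}"
    then obtain b where "b \<le> l i" "y = pt i b" "b \<noteq> j" "b \<le> j + 2" "j \<le> b + 2" using J_nbr[OF c(1) assms] by auto
    moreover hence "b \<in> {j - 2, j - 1, j + 1, j + 2}" using c by auto
    ultimately show "y \<in> pt i ` {j - 2, j - 1, j + 1, j + 2}" by blast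
  qed
  hence "card {y\<in>V. E x y} \<le> card (pt i ` {j - 2, j - 1, j + 1, j + 2})" by (rule card_mono[rotated]) simp
  also have "\<dots> \<le> card {j - 2, j - 1, j + 1, j + 2}" by (rule card_image_le) simp
  also have "\<dots> \<le> 4" by (auto simp: card_insert_if)
  finally show ?thesis .
qed

definition "KK = sum_list ls + 1"
definition "pos x = (case x of TV i j \<Rightarrow> i * KK + j | _ \<Rightarrow> 0)"

lemma pos_TV[simp]: "pos (TV i j) = i * KK + j" by (simp add: pos_def)

lemma l_lt_KK: "i < m \<Longrightarrow> l i < KK"
  using elem_le_sum_list[of i ls] unfolding KK_def by simp

lemma finV: "finite V"
proof -
  have "V \<subseteq> {TU, TW} \<union> (\<lambda>(i,j). TV i j) ` ({..<m} \<times> {..<KK})"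
  proof
    fix x assume "x \<in> V"
    then consider "x = TU" | "x = TW" | i j where "x = TV i j" "i < m" "j < l i"
      unfolding theta_vertices_def by auto
    thus "x \<in> {TU, TW} \<union> (\<lambda>(i,j). TV i j) ` ({..<m} \<times> {..<KK})"
    proof cases
      case (3 i j)
      hence "j < KK" using l_lt_KK[of i] by simp
      hence "(i, j) \<in> {..<m} \<times> {..<KK}" using 3 by simp
      hence "TV i j \<in> (\<lambda>(i,j). TV i j) ` ({..<m} \<times> {..<KK})" by (rule rev_image_eqI) simp
      thus ?thesis using 3 by simp
    qed auto
  qed
  thus ?thesis by (rule finite_subset) simp
qed

lemma finJ: "finite J" unfolding J_def using finV by simp
lemma JV: "x \<in> J \<Longrightarrow> x \<in> V" unfolding J_def by simp

lemma pos_inj: assumes "x \<in> J" "y \<in> J" "pos x = pos y" shows "x = y"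
proof -
  obtain i j where x: "x = TV i j" "i < m" "j + 2 \<le> l i" using J_char[OF assms(1)] by blast
  obtain i' j' where y: "y = TV i' j'" "i' < m" "j' + 2 \<le> l i'" using J_char[OF assms(2)] by blast
  have j: "j < KK" "j' < KK" using x y l_lt_KK[of i] l_lt_KK[of i'] by auto
  have e: "i * KK + j = i' * KK + j'" using assms(3) x y by simp
  hence "(i * KK + j) mod KK = (i' * KK + j') mod KK" by simp
  hence "j = j'" using j by simp
  with e have "i * KK = i' * KK" by simp
  hence "i = i'" using j by simp
  thus ?thesis using x y \<open>j = j'\<close> by simp
qed

definition "rp x = card {y\<in>J. pos x < pos y}"

lemma rp_lt: assumes "x \<in> J" shows "rp x < card J"
proof -
  have "{y\<in>J. pos x < pos y} \<subset> J" using assms by auto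
  thus ?thesis unfolding rp_def using finJ by (rule psubset_card_mono[rotated])
qed

lemma rp_mono: assumes "x \<in> J" "y \<in> J" "pos y < pos x" shows "rp x < rp y"
proof -
  have "{z\<in>J. pos x < pos z} \<subset> {z\<in>J. pos y < pos z}" using assms by auto
  thus ?thesis unfolding rp_def using finJ by (intro psubset_card_mono) auto
qed

lemma rp_inj: assumes "x \<in> J" "y \<in> J" "rp x = rp y" shows "x = y"
proof (rule ccontr)
  assume "x \<noteq> y"
  hence "pos x \<noteq> pos y" using pos_inj assms by blast
  thus False using rp_mono[OF assms(1,2)] rp_mono[OF assms(2,1)] assms(3) by (cases "pos x < pos y") auto
qed

lemma rp_inj_on: "inj_on rp J" by (rule inj_onI) (rule rp_inj)

lemma rp_band: assumes "x \<in> J" "y \<in> J" "pos y < pos x" shows "rp y \<le> rp x + (pos x - pos y)"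
proof -
  have "{z\<in>J. pos y < pos z} \<subseteq> {z\<in>J. pos x < pos z} \<union> {z\<in>J. pos y < pos z \<and> pos z \<le> pos x}" by auto
  hence "rp y \<le> card ({z\<in>J. pos x < pos z} \<union> {z\<in>J. pos y < pos z \<and> pos z \<le> pos x})"
    unfolding rp_def using finJ by (intro card_mono) auto
  also have "\<dots> \<le> rp x + card {z\<in>J. pos y < pos z \<and> pos z \<le> pos x}" unfolding rp_def by (rule card_Un_le)
  also have "card {z\<in>J. pos y < pos z \<and> pos z \<le> pos x} \<le> card {pos y <.. pos x}"
  proof -
    have "inj_on pos {z\<in>J. pos y < pos z \<and> pos z \<le> pos x}" by (rule inj_onI) (rule pos_inj, auto)
    moreover have "pos ` {z\<in>J. pos y < pos z \<and> pos z \<le> pos x} \<subseteq> {pos y <.. pos x}" by auto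
    ultimately show ?thesis by (rule card_inj_on_le) simp
  qed
  finally show ?thesis by simp
qed

lemma J_nbr_pos:
  assumes "x \<in> J" "y \<in> J" "E x y"
  shows "pos x \<noteq> pos y \<and> pos x \<le> pos y + 2 \<and> pos y \<le> pos x + 2"
proof -
  obtain i j where x: "x = TV i j" "i < m" "2 \<le> j" "j + 2 \<le> l i" using J_char[OF assms(1)] by blast
  obtain b where b: "b \<le> l i" "y = pt i b" "b \<noteq> j" "b \<le> j + 2" "j \<le> b + 2" using J_nbr[OF x(1) assms(1,3)] by blast
  obtain i' j' where y: "y = TV i' j'" using J_char[OF assms(2)] by blast
  have "i' = i" "j' = b" using b(2) y by simp_all
  hence yy: "y = TV i b" using y by simp
  show ?thesis unfolding yy x(1) pos_TV using b(3-5) by auto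
qed

definition "eF = k - (m + 3)"
definition "cW = card W0"
definition "G x = cW + (rp x - eF)"
definition "cc x = (if inF x then 0 else if inW x then 1 else if rp x < eF then (0::nat) else 1 + G x div k)"
definition "dd x = card {y\<in>V. E x y \<and> cc x < cc y}"

lemma cc_F: "inF x \<Longrightarrow> cc x = 0" by (simp add: cc_def)
lemma cc_W: "inW x \<Longrightarrow> cc x = 1" unfolding cc_def inW_def by simp
lemma cc_notJ: "y \<in> V \<Longrightarrow> y \<notin> J \<Longrightarrow> cc y \<le> 1" unfolding cc_def J_def by auto
lemma cc_J: "y \<in> J \<Longrightarrow> cc y = (if rp y < eF then 0 else 1 + G y div k)" unfolding cc_def J_def by auto

lemma cc_J_mono: assumes "x \<in> J" "y \<in> J" "rp y \<le> rp x" shows "cc y \<le> cc x"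
proof (cases "rp y < eF")
  case True thus ?thesis using cc_J[OF assms(2)] by simp
next
  case False
  hence "G y \<le> G x" using assms(3) unfolding G_def by simp
  hence "G y div k \<le> G x div k" by (rule div_le_mono)
  thus ?thesis using False assms(3) cc_J[OF assms(1)] cc_J[OF assms(2)] by simp
qed

lemma J_earlier:
  assumes "x \<in> J" "y \<in> V" "E x y" "cc x < cc y" "1 \<le> cc x"
  shows "y \<in> J \<and> rp x < rp y \<and> rp y \<le> rp x + 2"
proof -
  have yJ: "y \<in> J" using cc_notJ[OF assms(2)] assms(4,5) by fastforce
  have p: "pos x \<noteq> pos y" "pos x \<le> pos y + 2" "pos y \<le> pos x + 2" using J_nbr_pos[OF assms(1) yJ assms(3)] by auto
  have "pos y < pos x"
  proof (rule ccontr)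
    assume "\<not> pos y < pos x"
    hence "pos x < pos y" using p by simp
    hence "rp y < rp x" using rp_mono[OF yJ assms(1)] by simp
    hence "cc y \<le> cc x" using cc_J_mono[OF assms(1) yJ] by simp
    thus False using assms(4) by simp
  qed
  thus ?thesis using yJ rp_mono[OF assms(1) yJ] rp_band[OF assms(1) yJ] p by auto
qed

lemma ls_ne[simp]: "ls \<noteq> []"
proof
  assume "ls = []" hence "length ls = 0" by simp
  thus False using m3 by simp
qed
lemma m_pos[simp]: "0 < m" by simp

lemma pt_1: "i < m \<Longrightarrow> pt i 1 = TV i 1" using l2[of i] by (simp add: pt_mid)
lemma pt_lm1: "i < m \<Longrightarrow> pt i (l i - 1) = TV i (l i - 1)" using l2[of i] by (simp add: pt_mid)

lemma inF_pt1: "i < m \<Longrightarrow> inF (pt i 1)" by (subst pt_1) (auto simp: inF_def)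

lemma inF_simps[simp]: "inF TU" "inF (TV i 1)" "inF (TV 1 2)" "inF (TV 1 3)" "\<not> inF TW"
  by (auto simp: inF_def)

lemma inF_TV: "inF (TV i j) \<longleftrightarrow> j = 1 \<or> (i = 1 \<and> (j = 2 \<or> j = 3))" by (auto simp: inF_def)

lemma inW_TW[simp]: "inW TW" by (simp add: inW_def)
lemma inW_b: "\<not> inF (TV i (l i - 1)) \<Longrightarrow> inW (TV i (l i - 1))" unfolding inW_def by blast
lemma inW_2a: "\<not> inF (TV 2 (l 2 - 2)) \<Longrightarrow> inW (TV 2 (l 2 - 2))" unfolding inW_def by blast
lemma inW_2b: "\<not> inF (TV 2 (l 2 - 3)) \<Longrightarrow> inW (TV 2 (l 2 - 3))" unfolding inW_def by blast

lemma l1: "l 1 \<ge> 4" using l4[of 1] m3 by simp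
lemma l2': "l 2 \<ge> 4" using l4[of 2] m3 by simp

abbreviation "earlier x \<equiv> {y\<in>V. E x y \<and> cc x < cc y}"

lemma dd_le: "earlier x \<subseteq> S \<Longrightarrow> finite S \<Longrightarrow> dd x \<le> card S"
  unfolding dd_def by (rule card_mono)

lemma earlierF: "inF x \<Longrightarrow> y \<in> earlier x \<Longrightarrow> \<not> inF y"
  using cc_F by fastforce

lemma earlierW: "inW x \<Longrightarrow> y \<in> earlier x \<Longrightarrow> y \<in> J"
  using cc_W[of x] cc_notJ[of y] by fastforce

lemma card_img_le: "finite A \<Longrightarrow> card (f ` A) \<le> card A" by (rule card_image_le)

lemma dd_TU: "dd TU \<le> m"
proof -
  have "earlier TU \<subseteq> (\<lambda>i. pt i 2) ` {..<m}"
  proof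
    fix y assume y: "y \<in> earlier TU"
    have nF: "\<not> inF y" by (rule earlierF[OF _ y]) (simp add: inF_def)
    from y nbr_TU obtain i where i: "i < m" "y = pt i 1 \<or> (2 \<le> l i \<and> y = pt i 2)" by blast
    have "y \<noteq> pt i 1" using nF inF_pt1[OF i(1)] by auto
    hence "y = pt i 2" using i by auto
    thus "y \<in> (\<lambda>i. pt i 2) ` {..<m}" using i by blast
  qed
  hence "dd TU \<le> card ((\<lambda>i. pt i 2) ` {..<m})" by (rule dd_le) simp
  also have "\<dots> \<le> m" using card_img_le[of "{..<m}" "\<lambda>i. pt i 2"] by simp
  finally show ?thesis .
qed

lemma dd_a0: "dd (TV 0 1) \<le> m"
proof -
  have V: "TV 0 1 \<in> V" using m3 l0 by simp
  show ?thesis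
  proof (cases "l 0 = 2")
    case True
    have "earlier (TV 0 1) \<subseteq> insert (pt 0 2) ((\<lambda>i. pt i (l i - 1)) ` ({..<m} - {0}))"
    proof
      fix y assume y: "y \<in> earlier (TV 0 1)"
      have nF: "\<not> inF y" by (rule earlierF[OF _ y]) (simp add: inF_def)
      from y have "E (TV 0 1) y" by simp
      from nbr_TV[OF this V] show "y \<in> insert (pt 0 2) ((\<lambda>i. pt i (l i - 1)) ` ({..<m} - {0}))"
      proof (elim disjE exE conjE)
        fix b assume "b \<le> l 0" "y = pt 0 b" "b \<noteq> 1" "b \<le> 1 + 2" "1 \<le> b + 2"
        hence "b = 0 \<or> b = 2" using True by auto
        thus ?thesis using nF \<open>y = pt 0 b\<close> by auto
      next
        fix i' assume "i' < m" "y = pt i' 1" thus ?thesis using nF inF_pt1 by auto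
      next
        fix i' assume h: "i' < m" "y = pt i' (l i' - 1)"
        have "i' \<noteq> 0"
        proof
          assume "i' = 0" hence "y = pt 0 1" using h True by simp
          thus False using nF inF_pt1[of 0] by simp
        qed
        thus ?thesis using h by blast
      qed
    qed
    hence "dd (TV 0 1) \<le> card (insert (pt 0 2) ((\<lambda>i. pt i (l i - 1)) ` ({..<m} - {0})))" by (rule dd_le) simp
    also have "\<dots> \<le> Suc (card ((\<lambda>i. pt i (l i - 1)) ` ({..<m} - {0})))" by (rule card_insert_le_m1) simp_all
    also have "card ((\<lambda>i. pt i (l i - 1)) ` ({..<m} - {0})) \<le> card ({..<m} - {0::nat})" by (rule card_image_le) simp
    also have "card ({..<m} - {0::nat}) = m - 1" using m3 by simp
    finally show ?thesis using m3 by simp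
  next
    case False
    have "earlier (TV 0 1) \<subseteq> {pt 0 2, pt 0 3}"
    proof
      fix y assume y: "y \<in> earlier (TV 0 1)"
      have nF: "\<not> inF y" by (rule earlierF[OF _ y]) (simp add: inF_def)
      from y have "E (TV 0 1) y" by simp
      from nbr_TV[OF this V] show "y \<in> {pt 0 2, pt 0 3}"
      proof (elim disjE exE conjE)
        fix b assume "b \<le> l 0" "y = pt 0 b" "b \<noteq> 1" "b \<le> 1 + 2" "1 \<le> b + 2"
        hence "b = 0 \<or> b = 2 \<or> b = 3" by auto
        thus ?thesis using nF \<open>y = pt 0 b\<close> by auto
      next
        fix i' assume "i' < m" "y = pt i' 1" thus ?thesis using nF inF_pt1 by auto
      next
        fix i' assume h: "1 = l 0 - 1" thus ?thesis using False l0 by simp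
      qed
    qed
    hence "dd (TV 0 1) \<le> card {pt 0 2, pt 0 3}" by (rule dd_le) simp
    also have "\<dots> \<le> 2" by (simp add: card_insert_if)
    finally show ?thesis using m3 by simp
  qed
qed

lemma dd_a1: "dd (TV 1 1) = 0"
proof -
  have V: "TV 1 1 \<in> V" using m3 l1 by simp
  have "earlier (TV 1 1) \<subseteq> {}"
  proof
    fix y assume y: "y \<in> earlier (TV 1 1)"
    have nF: "\<not> inF y" by (rule earlierF[OF _ y]) (simp add: inF_def)
    from y have "E (TV 1 1) y" by simp
    from nbr_TV[OF this V] show "y \<in> {}"
    proof (elim disjE exE conjE)
      fix b assume "b \<le> l 1" "y = pt 1 b" "b \<noteq> 1" "b \<le> 1 + 2" "1 \<le> b + 2"
      hence "b = 0 \<or> b = 2 \<or> b = 3" by auto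
      thus ?thesis using nF \<open>y = pt 1 b\<close> l1 by (auto simp: inF_def pt_mid)
    next
      fix i' assume "i' < m" "y = pt i' 1" thus ?thesis using nF inF_pt1 by auto
    next
      assume "1 = l 1 - 1" thus ?thesis using l1 by simp
    qed
  qed
  thus ?thesis using dd_le[of "TV 1 1" "{}"] by simp
qed

lemma dd_ai: assumes "2 \<le> i" "i < m" shows "dd (TV i 1) \<le> 2"
proof -
  have li: "l i \<ge> 4" using l4 assms by simp
  have V: "TV i 1 \<in> V" using assms li by simp
  have "earlier (TV i 1) \<subseteq> {pt i 2, pt i 3}"
  proof
    fix y assume y: "y \<in> earlier (TV i 1)"
    have nF: "\<not> inF y" by (rule earlierF[OF _ y]) (simp add: inF_def)
    from y have "E (TV i 1) y" by simp
    from nbr_TV[OF this V] show "y \<in> {pt i 2, pt i 3}"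
    proof (elim disjE exE conjE)
      fix b assume "b \<le> l i" "y = pt i b" "b \<noteq> 1" "b \<le> 1 + 2" "1 \<le> b + 2"
      hence "b = 0 \<or> b = 2 \<or> b = 3" by auto
      thus ?thesis using nF \<open>y = pt i b\<close> by auto
    next
      fix i' assume "i' < m" "y = pt i' 1" thus ?thesis using nF inF_pt1 by auto
    next
      assume "1 = l i - 1" thus ?thesis using li by simp
    qed
  qed
  hence "dd (TV i 1) \<le> card {pt i 2, pt i 3}" by (rule dd_le) simp
  also have "\<dots> \<le> 2" by (simp add: card_insert_if)
  finally show ?thesis .
qed

lemma dd_12: "dd (TV 1 2) \<le> 1"
proof -
  have V: "TV 1 2 \<in> V" using m3 l1 by simp
  have "earlier (TV 1 2) \<subseteq> {pt 1 4}"
  proof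
    fix y assume y: "y \<in> earlier (TV 1 2)"
    have nF: "\<not> inF y" by (rule earlierF[OF _ y]) (simp add: inF_def)
    from y have "E (TV 1 2) y" by simp
    from nbr_TV[OF this V] show "y \<in> {pt 1 4}"
    proof (elim disjE exE conjE)
      fix b assume "b \<le> l 1" "y = pt 1 b" "b \<noteq> 2" "b \<le> 2 + 2" "2 \<le> b + 2"
      hence "b = 0 \<or> b = 1 \<or> b = 3 \<or> b = 4" by auto
      thus ?thesis using nF \<open>y = pt 1 b\<close> l1 by (auto simp: inF_def pt_mid)
    next
      assume "(2::nat) = 1" thus ?thesis by simp
    next
      assume "2 = l 1 - 1" thus ?thesis using l1 by simp
    qed
  qed
  hence "dd (TV 1 2) \<le> card {pt 1 4}" by (rule dd_le) simp
  thus ?thesis by simp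
qed

lemma dd_13: "dd (TV 1 3) \<le> m"
proof -
  have V: "TV 1 3 \<in> V" using m3 l1 by simp
  show ?thesis
  proof (cases "l 1 = 4")
    case True
    have "earlier (TV 1 3) \<subseteq> insert (pt 1 4) ((\<lambda>i. pt i (l i - 1)) ` ({..<m} - {1}))"
    proof
      fix y assume y: "y \<in> earlier (TV 1 3)"
      have nF: "\<not> inF y" by (rule earlierF[OF _ y]) (simp add: inF_def)
      from y have "E (TV 1 3) y" by simp
      from nbr_TV[OF this V] show "y \<in> insert (pt 1 4) ((\<lambda>i. pt i (l i - 1)) ` ({..<m} - {1}))"
      proof (elim disjE exE conjE)
        fix b assume "b \<le> l 1" "y = pt 1 b" "b \<noteq> 3" "b \<le> 3 + 2" "3 \<le> b + 2"
        hence "b = 1 \<or> b = 2 \<or> b = 4" using True by auto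
        thus ?thesis using nF \<open>y = pt 1 b\<close> l1 by (auto simp: inF_def pt_mid)
      next
        assume "(3::nat) = 1" thus ?thesis by simp
      next
        fix i' assume h: "i' < m" "y = pt i' (l i' - 1)"
        have "i' \<noteq> 1"
        proof
          assume "i' = 1" hence "y = TV 1 3" using h True pt_mid[of 3 1] by simp
          thus False using nF by (simp add: inF_def)
        qed
        thus ?thesis using h by blast
      qed
    qed
    hence "dd (TV 1 3) \<le> card (insert (pt 1 4) ((\<lambda>i. pt i (l i - 1)) ` ({..<m} - {1})))" by (rule dd_le) simp
    also have "\<dots> \<le> Suc (card ((\<lambda>i. pt i (l i - 1)) ` ({..<m} - {1})))" by (rule card_insert_le_m1) simp_all
    also have "card ((\<lambda>i. pt i (l i - 1)) ` ({..<m} - {1})) \<le> card ({..<m} - {1::nat})" by (rule card_image_le) simp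
    also have "card ({..<m} - {1::nat}) = m - 1" using m3 by simp
    finally show ?thesis using m3 by simp
  next
    case False
    have "earlier (TV 1 3) \<subseteq> {pt 1 4, pt 1 5}"
    proof
      fix y assume y: "y \<in> earlier (TV 1 3)"
      have nF: "\<not> inF y" by (rule earlierF[OF _ y]) (simp add: inF_def)
      from y have "E (TV 1 3) y" by simp
      from nbr_TV[OF this V] show "y \<in> {pt 1 4, pt 1 5}"
      proof (elim disjE exE conjE)
        fix b assume "b \<le> l 1" "y = pt 1 b" "b \<noteq> 3" "b \<le> 3 + 2" "3 \<le> b + 2"
        hence "b = 1 \<or> b = 2 \<or> b = 4 \<or> b = 5" by auto
        thus ?thesis using nF \<open>y = pt 1 b\<close> l1 by (auto simp: inF_def pt_mid)
      next
        assume "(3::nat) = 1" thus ?thesis by simp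
      next
        assume "3 = l 1 - 1" thus ?thesis using False l1 by simp
      qed
    qed
    hence "dd (TV 1 3) \<le> card {pt 1 4, pt 1 5}" by (rule dd_le) simp
    also have "\<dots> \<le> 2" by (simp add: card_insert_if)
    finally show ?thesis using m3 by simp
  qed
qed

lemma dd_J4: "x \<in> J \<Longrightarrow> dd x \<le> 4"
proof -
  assume x: "x \<in> J"
  have "earlier x \<subseteq> {y\<in>V. E x y}" by auto
  hence "dd x \<le> card {y\<in>V. E x y}" by (rule dd_le) (simp add: finV)
  thus ?thesis using J_deg[OF x] by simp
qed

lemma notJ_TW[simp]: "TW \<notin> J" unfolding J_def by simp
lemma notJ_TU[simp]: "TU \<notin> J" unfolding J_def by simp
lemma notJ_b: "i < m \<Longrightarrow> pt i (l i - 1) \<notin> J"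
  unfolding pt_lm1 J_def using inW_b by blast
lemma notJ_w2: "pt 2 (l 2 - 2) \<notin> J"
proof -
  have e: "pt 2 (l 2 - 2) = TV 2 (l 2 - 2)" using l2' by (simp add: pt_mid)
  have "\<not> inF (TV 2 (l 2 - 2))" using l2' by (simp add: inF_TV)
  thus ?thesis unfolding e J_def using inW_2a by simp
qed
lemma notJ_w3: "pt 2 (l 2 - 3) \<notin> J"
proof -
  have e: "pt 2 (l 2 - 3) = TV 2 (l 2 - 3)" using l2' by (simp add: pt_mid)
  show ?thesis
  proof (cases "inF (TV 2 (l 2 - 3))")
    case True thus ?thesis unfolding e J_def by simp
  next
    case False thus ?thesis unfolding e J_def using inW_2b by simp
  qed
qed

lemma pt_l_notJ: "i < m \<Longrightarrow> pt i (l i) \<notin> J" by (subst pt_l) simp_all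

lemma dd_TW: "dd TW \<le> m"
proof -
  have "earlier TW \<subseteq> (\<lambda>i. pt i (l i - 2)) ` {..<m}"
  proof
    fix y assume y: "y \<in> earlier TW"
    have yJ: "y \<in> J" by (rule earlierW[OF _ y]) simp
    from y nbr_TW obtain i where i: "i < m" "y = pt i (l i - 1) \<or> y = pt i (l i - 2)" by blast
    have "y \<noteq> pt i (l i - 1)" using yJ notJ_b[OF i(1)] by auto
    hence "y = pt i (l i - 2)" using i by auto
    thus "y \<in> (\<lambda>i. pt i (l i - 2)) ` {..<m}" using i by blast
  qed
  hence "dd TW \<le> card ((\<lambda>i. pt i (l i - 2)) ` {..<m})" by (rule dd_le) simp
  also have "\<dots> \<le> m" using card_img_le[of "{..<m}" "\<lambda>i. pt i (l i - 2)"] by simp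
  finally show ?thesis .
qed

lemma earlier_b:
  assumes "i < m" "inW (TV i (l i - 1))"
  shows "earlier (TV i (l i - 1)) \<subseteq> {pt i (l i - 3), pt i (l i - 2)} \<inter> J"
proof
  have li: "l i \<ge> 2" using l2 assms(1) by simp
  have V: "TV i (l i - 1) \<in> V" using assms(1) li by simp
  fix y assume y: "y \<in> earlier (TV i (l i - 1))"
  have yJ: "y \<in> J" by (rule earlierW[OF assms(2) y])
  from y have "E (TV i (l i - 1)) y" by simp
  from nbr_TV[OF this V] show "y \<in> {pt i (l i - 3), pt i (l i - 2)} \<inter> J"
  proof (elim disjE exE conjE)
    fix b assume b: "b \<le> l i" "y = pt i b" "b \<noteq> l i - 1" "b \<le> l i - 1 + 2" "l i - 1 \<le> b + 2"
    hence "b = l i - 3 \<or> b = l i - 2 \<or> b = l i" using li by auto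
    moreover have "y \<noteq> pt i (l i)" using yJ pt_l_notJ[OF assms(1)] by auto
    ultimately show ?thesis using b yJ by auto
  next
    assume "l i - 1 = 1"
    hence "inF (TV i (l i - 1))" by (simp add: inF_TV)
    thus ?thesis using assms(2) unfolding inW_def by simp
  next
    fix i' assume "i' < m" "y = pt i' (l i' - 1)"
    thus ?thesis using yJ notJ_b by auto
  qed
qed

lemma dd_bW: assumes "i < m" "inW (TV i (l i - 1))" shows "dd (TV i (l i - 1)) \<le> 2"
proof -
  have "dd (TV i (l i - 1)) \<le> card {pt i (l i - 3), pt i (l i - 2)}"
    using earlier_b[OF assms] by (intro dd_le) auto
  also have "\<dots> \<le> 2" by (simp add: card_insert_if)
  finally show ?thesis .
qed

lemma b2_W: "inW (TV 2 (l 2 - 1))"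
  using l2' by (intro inW_b) (simp add: inF_TV)

lemma dd_b2: "dd (TV 2 (l 2 - 1)) = 0"
proof -
  have "earlier (TV 2 (l 2 - 1)) \<subseteq> {}"
    using earlier_b[OF _ b2_W] m3 notJ_w2 notJ_w3 by auto
  thus ?thesis using dd_le[of _ "{}"] by fastforce
qed

lemma dd_w2: "dd (TV 2 (l 2 - 2)) \<le> 1"
proof -
  have li: "l 2 \<ge> 4" by (rule l2')
  have V: "TV 2 (l 2 - 2) \<in> V" using m3 li by simp
  have W: "inW (TV 2 (l 2 - 2))" using li by (intro inW_2a) (simp add: inF_TV)
  have "earlier (TV 2 (l 2 - 2)) \<subseteq> {pt 2 (l 2 - 4)}"
  proof
    fix y assume y: "y \<in> earlier (TV 2 (l 2 - 2))"
    have yJ: "y \<in> J" by (rule earlierW[OF W y])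
    from y have "E (TV 2 (l 2 - 2)) y" by simp
    from nbr_TV[OF this V] show "y \<in> {pt 2 (l 2 - 4)}"
    proof (elim disjE exE conjE)
      fix b assume b: "b \<le> l 2" "y = pt 2 b" "b \<noteq> l 2 - 2" "b \<le> l 2 - 2 + 2" "l 2 - 2 \<le> b + 2"
      hence "b = l 2 - 4 \<or> b = l 2 - 3 \<or> b = l 2 - 1 \<or> b = l 2" using li by auto
      moreover have "y \<noteq> pt 2 (l 2)" using yJ pt_l_notJ[of 2] m3 by auto
      moreover have "y \<noteq> pt 2 (l 2 - 3)" using yJ notJ_w3 by auto
      moreover have "y \<noteq> pt 2 (l 2 - 1)" using yJ notJ_b[of 2] m3 by auto
      ultimately show ?thesis using b by auto
    next
      assume "l 2 - 2 = 1" thus ?thesis using li by simp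
    next
      assume "l 2 - 2 = l 2 - 1" thus ?thesis using li by simp
    qed
  qed
  hence "dd (TV 2 (l 2 - 2)) \<le> card {pt 2 (l 2 - 4)}" by (rule dd_le) simp
  thus ?thesis by simp
qed

lemma dd_w3: assumes "inW (TV 2 (l 2 - 3))" shows "dd (TV 2 (l 2 - 3)) \<le> 2"
proof -
  have li: "l 2 \<ge> 4" by (rule l2')
  have ne1: "l 2 - 3 \<noteq> 1" using assms unfolding inW_def by (auto simp: inF_TV)
  have V: "TV 2 (l 2 - 3) \<in> V" using m3 li by simp
  have "earlier (TV 2 (l 2 - 3)) \<subseteq> {pt 2 (l 2 - 5), pt 2 (l 2 - 4)}"
  proof
    fix y assume y: "y \<in> earlier (TV 2 (l 2 - 3))"
    have yJ: "y \<in> J" by (rule earlierW[OF assms y])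
    from y have "E (TV 2 (l 2 - 3)) y" by simp
    from nbr_TV[OF this V] show "y \<in> {pt 2 (l 2 - 5), pt 2 (l 2 - 4)}"
    proof (elim disjE exE conjE)
      fix b assume b: "b \<le> l 2" "y = pt 2 b" "b \<noteq> l 2 - 3" "b \<le> l 2 - 3 + 2" "l 2 - 3 \<le> b + 2"
      hence "b = l 2 - 5 \<or> b = l 2 - 4 \<or> b = l 2 - 2 \<or> b = l 2 - 1" using li ne1 by auto
      moreover have "y \<noteq> pt 2 (l 2 - 2)" using yJ notJ_w2 by auto
      moreover have "y \<noteq> pt 2 (l 2 - 1)" using yJ notJ_b[of 2] m3 by auto
      ultimately show ?thesis using b by auto
    next
      assume "l 2 - 3 = 1" thus ?thesis using ne1 by simp
    next
      assume "l 2 - 3 = l 2 - 1" thus ?thesis using li by simp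
    qed
  qed
  hence "dd (TV 2 (l 2 - 3)) \<le> card {pt 2 (l 2 - 5), pt 2 (l 2 - 4)}" by (rule dd_le) simp
  also have "\<dots> \<le> 2" by (simp add: card_insert_if)
  finally show ?thesis .
qed

lemma earlier_J:
  assumes "x \<in> J" "1 \<le> cc x"
  shows "earlier x \<subseteq> {y\<in>J. (rp y = rp x + 1 \<or> rp y = rp x + 2) \<and> cc x < cc y}"
proof
  fix y assume y: "y \<in> earlier x"
  have "y \<in> J \<and> rp x < rp y \<and> rp y \<le> rp x + 2" using J_earlier[OF assms(1) _ _ _ assms(2)] y by auto
  thus "y \<in> {y\<in>J. (rp y = rp x + 1 \<or> rp y = rp x + 2) \<and> cc x < cc y}" using y by auto
qed

lemma card_rp_set: "card {y\<in>J. P (rp y)} \<le> card {r. r < card J \<and> P r}"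
proof -
  have "inj_on rp {y\<in>J. P (rp y)}" using rp_inj_on by (rule inj_on_subset) auto
  moreover have "rp ` {y\<in>J. P (rp y)} \<subseteq> {r. r < card J \<and> P r}" using rp_lt by auto
  ultimately show ?thesis by (rule card_inj_on_le) simp
qed

lemma dd_J2: assumes "x \<in> J" "1 \<le> cc x" shows "dd x \<le> 2"
proof -
  have "dd x \<le> card {y\<in>J. rp y \<in> {rp x + 1, rp x + 2}}"
    using earlier_J[OF assms] finJ by (intro dd_le) auto
  also have "\<dots> \<le> card {r. r < card J \<and> r \<in> {rp x + 1, rp x + 2}}" by (rule card_rp_set)
  also have "\<dots> \<le> card {rp x + 1, rp x + 2}" by (rule card_mono) auto
  also have "\<dots> \<le> 2" by (simp add: card_insert_if)
  finally show ?thesis .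
qed

lemma dd_J_pos: assumes "x \<in> J" "1 \<le> cc x" "1 \<le> dd x"
  shows "\<exists>y\<in>J. rp x < rp y \<and> rp y \<le> rp x + 2 \<and> cc x < cc y"
proof -
  have "earlier x \<noteq> {}" using assms(3) unfolding dd_def by (metis card.empty not_one_le_zero)
  then obtain y where "y \<in> earlier x" by blast
  hence "y \<in> J" "rp y = rp x + 1 \<or> rp y = rp x + 2" "cc x < cc y" using earlier_J[OF assms(1,2)] by auto
  thus ?thesis by (intro bexI[of _ y]) auto
qed

lemma dd_J_two: assumes "x \<in> J" "1 \<le> cc x" "2 \<le> dd x"
  shows "\<exists>y\<in>J. rp y = rp x + 1 \<and> cc x < cc y"
proof (rule ccontr)
  assume "\<not> ?thesis"
  hence "earlier x \<subseteq> {y\<in>J. rp y \<in> {rp x + 2}}" using earlier_J[OF assms(1,2)] by auto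
  hence "dd x \<le> card {y\<in>J. rp y \<in> {rp x + 2}}" using finJ by (intro dd_le) auto
  also have "\<dots> \<le> card {r. r < card J \<and> r \<in> {rp x + 2}}" by (rule card_rp_set)
  also have "\<dots> \<le> card {rp x + 2}" by (rule card_mono) auto
  finally show False using assms(3) by simp
qed

lemma F0_eq: "F0 = {TU, TV 1 2, TV 1 3} \<union> (\<lambda>i. TV i 1) ` {..<m}"
proof
  show "F0 \<subseteq> {TU, TV 1 2, TV 1 3} \<union> (\<lambda>i. TV i 1) ` {..<m}"
    unfolding F0_def inF_def by auto
  show "{TU, TV 1 2, TV 1 3} \<union> (\<lambda>i. TV i 1) ` {..<m} \<subseteq> F0"
  proof -
    have "TV i 1 \<in> F0" if "i < m" for i using that l2[OF that] unfolding F0_def inF_def by auto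
    moreover have "{TU, TV 1 2, TV 1 3} \<subseteq> F0" using l1 m3 unfolding F0_def inF_def by auto
    ultimately show ?thesis by auto
  qed
qed

lemma card_F0: "card F0 = m + 3"
proof -
  have "card ((\<lambda>i. TV i 1) ` {..<m}) = m" by (subst card_image) (auto simp: inj_on_def)
  moreover have "card ({TU, TV 1 2, TV 1 3} \<union> (\<lambda>i. TV i 1) ` {..<m}) = card {TU, TV 1 2, TV 1 3} + card ((\<lambda>i. TV i 1) ` {..<m})"
    by (rule card_Un_disjoint) auto
  moreover have "card {TU, TV 1 2, TV 1 3} = 3" by simp
  ultimately show ?thesis unfolding F0_eq by simp
qed

lemma W0_sub: "W0 \<subseteq> {TW, TV 2 (l 2 - 2), TV 2 (l 2 - 3)} \<union> (\<lambda>i. TV i (l i - 1)) ` {..<m}"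
  unfolding W0_def inW_def by auto

lemma card_W0: "card W0 \<le> m + 3"
proof -
  have "card W0 \<le> card ({TW, TV 2 (l 2 - 2), TV 2 (l 2 - 3)} \<union> (\<lambda>i. TV i (l i - 1)) ` {..<m})"
    using W0_sub by (rule card_mono[rotated]) simp
  also have "\<dots> \<le> card {TW, TV 2 (l 2 - 2), TV 2 (l 2 - 3)} + card ((\<lambda>i. TV i (l i - 1)) ` {..<m})"
    by (rule card_Un_le)
  also have "card {TW, TV 2 (l 2 - 2), TV 2 (l 2 - 3)} \<le> 3" by (simp add: card_insert_if)
  also have "card ((\<lambda>i. TV i (l i - 1)) ` {..<m}) \<le> m" using card_img_le[of "{..<m}"] by simp
  finally show ?thesis by simp
qed

lemma card_V: "card V = card F0 + card W0 + card J"
proof -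
  have "V = F0 \<union> W0 \<union> J" unfolding F0_def W0_def J_def by auto
  moreover have "card (F0 \<union> W0 \<union> J) = card (F0 \<union> W0) + card J"
    by (rule card_Un_disjoint) (auto simp: F0_def W0_def J_def finJ intro: finite_subset[OF _ finV])
  moreover have "card (F0 \<union> W0) = card F0 + card W0"
    by (rule card_Un_disjoint) (auto simp: F0_def W0_def inW_def intro: finite_subset[OF _ finV])
  ultimately show ?thesis by simp
qed

lemma G_inj: "inj_on G {x\<in>J. eF \<le> rp x}"
proof (rule inj_onI)
  fix x y assume "x \<in> {x\<in>J. eF \<le> rp x}" "y \<in> {x\<in>J. eF \<le> rp x}" "G x = G y"
  hence "rp x = rp y" "x \<in> J" "y \<in> J" unfolding G_def by auto
  thus "x = y" by (rule rp_inj[rotated 2])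
qed

lemma card_G_range: "card {x\<in>J. eF \<le> rp x \<and> a \<le> G x \<and> G x < b} \<le> b - a"
proof -
  have "inj_on G {x\<in>J. eF \<le> rp x \<and> a \<le> G x \<and> G x < b}" using G_inj by (rule inj_on_subset) auto
  moreover have "G ` {x\<in>J. eF \<le> rp x \<and> a \<le> G x \<and> G x < b} \<subseteq> {a..<b}" by auto
  ultimately have "card {x\<in>J. eF \<le> rp x \<and> a \<le> G x \<and> G x < b} \<le> card {a..<b}" by (rule card_inj_on_le) simp
  thus ?thesis by simp
qed

lemma card_EF: "card {x\<in>J. rp x < eF} \<le> eF"
proof -
  have "card {x\<in>J. rp x < eF} \<le> card {r. r < card J \<and> r < eF}" by (rule card_rp_set)
  also have "\<dots> \<le> card {..<eF}" by (rule card_mono) auto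
  finally show ?thesis by simp
qed

lemma eF_k: "k = m + 3 + eF" using km unfolding eF_def by simp

lemma cc0_cases: assumes "y \<in> V" "cc y = 0"
  shows "inF y \<or> (y \<in> J \<and> rp y < eF)"
  using assms unfolding cc_def J_def by (auto split: if_splits)

lemma chunk0:
  assumes "v \<in> V" "cc v = 0" "1 \<le> dd v"
  shows "card {y\<in>V. cc y = cc v \<and> dd v \<le> dd y} + dd v \<le> k"
proof -
  define j where "j = dd v"
  define A where "A = (if j \<le> m then {TU, TV 0 1, TV 1 3} else {})"
  define B where "B = (if j \<le> 2 then (\<lambda>i. TV i 1) ` {2..<m} else {})"
  define C where "C = (if j \<le> 1 then {TV 1 2} else {})"
  define D where "D = (if j \<le> 4 then {x\<in>J. rp x < eF} else {})"
  have sub: "{y\<in>V. cc y = cc v \<and> dd v \<le> dd y} \<subseteq> A \<union> B \<union> C \<union> D"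
  proof
    fix y assume y: "y \<in> {y\<in>V. cc y = cc v \<and> dd v \<le> dd y}"
    hence yV: "y \<in> V" and y0: "cc y = 0" and jy: "j \<le> dd y" using assms(2) unfolding j_def by auto
    have j1: "1 \<le> j" using assms(3) unfolding j_def .
    from cc0_cases[OF yV y0] show "y \<in> A \<union> B \<union> C \<union> D"
    proof
      assume F: "inF y"
      then consider "y = TU" | "y = TV 1 2" | "y = TV 1 3" | i where "y = TV i 1" unfolding inF_def by blast
      thus ?thesis
      proof cases
        case 1 thus ?thesis using dd_TU jy unfolding A_def by auto
      next
        case 2 thus ?thesis using dd_12 jy unfolding C_def by auto
      next
        case 3 thus ?thesis using dd_13 jy unfolding A_def by auto
      next
        case (4 i)
        have im: "i < m" using yV 4 by simp
        show ?thesis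
        proof (cases "i = 0")
          case True thus ?thesis using 4 dd_a0 jy unfolding A_def by auto
        next
          case False
          show ?thesis
          proof (cases "i = 1")
            case True thus ?thesis using 4 dd_a1 jy j1 by auto
          next
            case False
            hence "2 \<le> i" using \<open>i \<noteq> 0\<close> by simp
            thus ?thesis using 4 dd_ai[OF _ im] jy im unfolding B_def by force
          qed
        qed
      qed
    next
      assume "y \<in> J \<and> rp y < eF"
      thus ?thesis using dd_J4[of y] jy unfolding D_def by auto
    qed
  qed
  have cA: "card A \<le> (if j \<le> m then 3 else 0)" unfolding A_def by (auto simp: card_insert_if)
  have cB: "card B \<le> (if j \<le> 2 then m - 2 else 0)" unfolding B_def
    using card_img_le[of "{2..<m}" "\<lambda>i. TV i 1"] by auto
  have cC: "card C \<le> (if j \<le> 1 then 1 else 0)" unfolding C_def by auto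
  have cD: "card D \<le> (if j \<le> 4 then eF else 0)" unfolding D_def using card_EF by auto
  have fin: "finite A" "finite B" "finite C" "finite D" unfolding A_def B_def C_def D_def using finJ by auto
  have "card {y\<in>V. cc y = cc v \<and> dd v \<le> dd y} \<le> card (A \<union> B \<union> C \<union> D)"
    using sub fin by (intro card_mono) auto
  also have "\<dots> \<le> card A + card B + card C + card D"
  proof -
    have "card (A \<union> B \<union> C \<union> D) \<le> card (A \<union> B \<union> C) + card D" by (rule card_Un_le)
    moreover have "card (A \<union> B \<union> C) \<le> card (A \<union> B) + card C" by (rule card_Un_le)
    moreover have "card (A \<union> B) \<le> card A + card B" by (rule card_Un_le)
    ultimately show ?thesis by linarith
  qed
  finally have c: "card {y\<in>V. cc y = cc v \<and> dd v \<le> dd y} \<le> card A + card B + card C + card D" .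
  have vin: "v \<in> A \<union> B \<union> C \<union> D" using sub assms by auto
  hence jb: "j \<le> m \<or> j \<le> 4" unfolding A_def B_def C_def D_def by (auto split: if_splits)
  have j1: "1 \<le> j" using assms(3) unfolding j_def .
  have "card A + card B + card C + card D + j \<le> k"
    using cA cB cC cD jb j1 m3 eF_k by (auto split: if_splits)
  thus ?thesis using c unfolding j_def by linarith
qed

lemma k_pos: "0 < k" using km by simp

lemma cc1_cases: assumes "y \<in> V" "cc y = 1"
  shows "inW y \<or> (y \<in> J \<and> eF \<le> rp y \<and> G y < k)"
proof -
  have "\<not> inF y" using assms cc_F by fastforce
  moreover have "y \<in> J \<Longrightarrow> \<not> inW y \<Longrightarrow> eF \<le> rp y \<and> G y < k"
    using assms(2) cc_J[of y] k_pos by (auto split: if_splits simp: div_eq_0_iff)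
  ultimately show ?thesis using assms(1) unfolding J_def by blast
qed

lemma M1_dd: assumes "y \<in> V" "cc y = 1" "y \<noteq> TW" shows "dd y \<le> 2"
  using cc1_cases[OF assms(1,2)]
proof
  assume W: "inW y"
  hence "y = TW \<or> (\<exists>i. y = TV i (l i - 1)) \<or> y = TV 2 (l 2 - 2) \<or> y = TV 2 (l 2 - 3)" unfolding inW_def by blast
  thus ?thesis
  proof (elim disjE exE)
    assume "y = TW" thus ?thesis using assms by simp
  next
    fix i assume y: "y = TV i (l i - 1)"
    have "i < m" using assms(1) y by simp
    thus ?thesis using dd_bW[of i] W y by simp
  next
    assume "y = TV 2 (l 2 - 2)" thus ?thesis using dd_w2 by simp
  next
    assume "y = TV 2 (l 2 - 3)" thus ?thesis using dd_w3 W by simp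
  qed
next
  assume "y \<in> J \<and> eF \<le> rp y \<and> G y < k"
  thus ?thesis using dd_J2[of y] assms(2) by simp
qed

lemma M1_card: "card {y\<in>V. cc y = 1} \<le> k"
proof -
  have "{y\<in>V. cc y = 1} \<subseteq> W0 \<union> {x\<in>J. eF \<le> rp x \<and> cW \<le> G x \<and> G x < k}"
    using cc1_cases unfolding W0_def G_def by auto
  hence "card {y\<in>V. cc y = 1} \<le> card (W0 \<union> {x\<in>J. eF \<le> rp x \<and> cW \<le> G x \<and> G x < k})"
    by (rule card_mono[rotated]) (simp add: W0_def finJ finV)
  also have "\<dots> \<le> card W0 + card {x\<in>J. eF \<le> rp x \<and> cW \<le> G x \<and> G x < k}" by (rule card_Un_le)
  also have "\<dots> \<le> cW + (k - cW)" using card_G_range[of cW k] unfolding cW_def by simp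
  also have "\<dots> \<le> k" using card_W0 km unfolding cW_def by simp
  finally show ?thesis .
qed

lemma b2_V: "TV 2 (l 2 - 1) \<in> V" using m3 l2' by simp
lemma w2_V: "TV 2 (l 2 - 2) \<in> V" using m3 l2' by simp
lemma b2_cc: "cc (TV 2 (l 2 - 1)) = 1" using cc_W[OF b2_W] .
lemma w2_cc: "cc (TV 2 (l 2 - 2)) = 1" using l2' by (intro cc_W inW_2a) (simp add: inF_TV)

lemma chunk1:
  assumes "v \<in> V" "cc v = 1" "1 \<le> dd v"
  shows "card {y\<in>V. cc y = cc v \<and> dd v \<le> dd y} + dd v \<le> k"
proof -
  define M where "M = {y\<in>V. cc y = 1}"
  have finM: "finite M" unfolding M_def using finV by simp
  have cM: "card M \<le> k" unfolding M_def by (rule M1_card)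
  have b2M: "TV 2 (l 2 - 1) \<in> M" unfolding M_def using b2_V b2_cc by simp
  have w2M: "TV 2 (l 2 - 2) \<in> M" unfolding M_def using w2_V w2_cc by simp
  have ne: "TV 2 (l 2 - 1) \<noteq> TV 2 (l 2 - 2)" using l2' by simp
  consider "dd v = 1" | "dd v = 2" | "3 \<le> dd v" using assms(3) by linarith
  thus ?thesis
  proof cases
    case 1
    have "{y\<in>V. cc y = cc v \<and> dd v \<le> dd y} \<subseteq> M - {TV 2 (l 2 - 1)}"
      using assms(2) 1 dd_b2 unfolding M_def by auto
    hence "card {y\<in>V. cc y = cc v \<and> dd v \<le> dd y} \<le> card (M - {TV 2 (l 2 - 1)})"
      using finM by (intro card_mono) auto
    also have "\<dots> = card M - 1" using b2M finM by simp
    moreover have "card M \<ge> 1" using b2M finM by (metis One_nat_def Suc_leI card_gt_0_iff empty_iff)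
    ultimately show ?thesis using 1 cM by linarith
  next
    case 2
    have "{y\<in>V. cc y = cc v \<and> dd v \<le> dd y} \<subseteq> M - {TV 2 (l 2 - 1), TV 2 (l 2 - 2)}"
      using assms(2) 2 dd_b2 dd_w2 unfolding M_def by auto
    hence "card {y\<in>V. cc y = cc v \<and> dd v \<le> dd y} \<le> card (M - {TV 2 (l 2 - 1), TV 2 (l 2 - 2)})"
      using finM by (intro card_mono) auto
    also have "\<dots> = card M - 2" using b2M w2M ne finM by (simp add: card_Diff_subset)
    finally have "card {y\<in>V. cc y = cc v \<and> dd v \<le> dd y} \<le> card M - 2" .
    moreover have "card M \<ge> 2"
    proof -
      have "{TV 2 (l 2 - 1), TV 2 (l 2 - 2)} \<subseteq> M" using b2M w2M by simp
      hence "card {TV 2 (l 2 - 1), TV 2 (l 2 - 2)} \<le> card M" using finM by (rule card_mono[rotated])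
      thus ?thesis using ne by simp
    qed
    ultimately show ?thesis using 2 cM by linarith
  next
    case 3
    have vT: "v = TW"
    proof (rule ccontr)
      assume "v \<noteq> TW" thus False using M1_dd[OF assms(1,2)] 3 by simp
    qed
    have "{y\<in>V. cc y = cc v \<and> dd v \<le> dd y} \<subseteq> {TW}"
    proof
      fix y assume y: "y \<in> {y\<in>V. cc y = cc v \<and> dd v \<le> dd y}"
      show "y \<in> {TW}"
      proof (rule ccontr)
        assume "y \<notin> {TW}"
        hence "dd y \<le> 2" using M1_dd[of y] y assms(2) by simp
        thus False using y 3 by simp
      qed
    qed
    hence "card {y\<in>V. cc y = cc v \<and> dd v \<le> dd y} \<le> card {TW}" by (rule card_mono[rotated]) simp
    hence "card {y\<in>V. cc y = cc v \<and> dd v \<le> dd y} \<le> 1" by simp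
    thus ?thesis using vT dd_TW km by simp
  qed
qed

lemma ccJ_hi: "x \<in> J \<Longrightarrow> eF \<le> rp x \<Longrightarrow> cc x = 1 + G x div k"
  using cc_J[of x] by simp

lemma div_bounds: assumes "(g::nat) div k = q" shows "q * k \<le> g" "g < (q + 1) * k"
proof -
  show "q * k \<le> g" using assms div_times_less_eq_dividend by blast
  have "g mod k < k" using k_pos by simp
  thus "g < (q + 1) * k" using assms div_mult_mod_eq[of g k] by (simp add: algebra_simps)
qed

lemma cct_cases: assumes "y \<in> V" "cc y = t" "2 \<le> t"
  shows "y \<in> J \<and> eF \<le> rp y \<and> (t - 1) * k \<le> G y \<and> G y < t * k"
proof -
  have yJ: "y \<in> J" using cc_notJ[OF assms(1)] assms(2,3) by fastforce
  have r: "eF \<le> rp y" using cc_J[OF yJ] assms(2,3) by (auto split: if_splits)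
  have "G y div k = t - 1" using ccJ_hi[OF yJ r] assms(2,3) by simp
  from div_bounds[OF this] show ?thesis using yJ r assms(3) by simp
qed

lemma G_diff: "eF \<le> rp x \<Longrightarrow> eF \<le> rp y \<Longrightarrow> rp x \<le> rp y \<Longrightarrow> G y = G x + (rp y - rp x)"
  unfolding G_def by simp

lemma ddt_1: assumes "x \<in> V" "cc x = t" "2 \<le> t" "1 \<le> dd x" shows "t * k \<le> G x + 2"
proof -
  have c: "x \<in> J" "eF \<le> rp x" using cct_cases[OF assms(1-3)] by auto
  obtain y where y: "y \<in> J" "rp x < rp y" "rp y \<le> rp x + 2" "cc x < cc y"
    using dd_J_pos[OF c(1) _ assms(4)] assms(2,3) by auto
  have ry: "eF \<le> rp y" using c y by simp
  have "t < 1 + G y div k" using y(4) ccJ_hi[OF y(1) ry] assms(2) by simp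
  hence "t \<le> G y div k" by simp
  hence "t * k \<le> G y div k * k" by simp
  also have "\<dots> \<le> G y" by (rule div_times_less_eq_dividend)
  finally show ?thesis using G_diff[OF c(2) ry] y by simp
qed

lemma ddt_2: assumes "x \<in> V" "cc x = t" "2 \<le> t" "2 \<le> dd x" shows "t * k \<le> G x + 1"
proof -
  have c: "x \<in> J" "eF \<le> rp x" using cct_cases[OF assms(1-3)] by auto
  obtain y where y: "y \<in> J" "rp y = rp x + 1" "cc x < cc y"
    using dd_J_two[OF c(1) _ assms(4)] assms(2,3) by auto
  have ry: "eF \<le> rp y" using c y by simp
  have "t < 1 + G y div k" using y(3) ccJ_hi[OF y(1) ry] assms(2) by simp
  hence "t \<le> G y div k" by simp
  hence "t * k \<le> G y div k * k" by simp
  also have "\<dots> \<le> G y" by (rule div_times_less_eq_dividend)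
  finally show ?thesis using G_diff[OF c(2) ry] y by simp
qed

lemma chunkt:
  assumes "v \<in> V" "cc v = t" "2 \<le> t" "1 \<le> dd v"
  shows "card {y\<in>V. cc y = cc v \<and> dd v \<le> dd y} + dd v \<le> k"
proof -
  have d2: "dd v \<le> 2" using cct_cases[OF assms(1-3)] dd_J2[of v] assms(2,3) by simp
  have k6: "6 \<le> k" using km m3 by simp
  consider "dd v = 1" | "dd v = 2" using d2 assms(4) by linarith
  thus ?thesis
  proof cases
    case 1
    have "{y\<in>V. cc y = cc v \<and> dd v \<le> dd y} \<subseteq> {x\<in>J. eF \<le> rp x \<and> t * k - 2 \<le> G x \<and> G x < t * k}"
    proof
      fix y assume y: "y \<in> {y\<in>V. cc y = cc v \<and> dd v \<le> dd y}"
      have "t * k \<le> G y + 2" using ddt_1[of y t] y assms 1 by simp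
      thus "y \<in> {x\<in>J. eF \<le> rp x \<and> t * k - 2 \<le> G x \<and> G x < t * k}" using cct_cases[of y t] y assms by auto
    qed
    hence "card {y\<in>V. cc y = cc v \<and> dd v \<le> dd y} \<le> card {x\<in>J. eF \<le> rp x \<and> t * k - 2 \<le> G x \<and> G x < t * k}"
      by (rule card_mono[rotated]) (simp add: finJ)
    also have "\<dots> \<le> t * k - (t * k - 2)" by (rule card_G_range)
    finally show ?thesis using 1 k6 by linarith
  next
    case 2
    have "{y\<in>V. cc y = cc v \<and> dd v \<le> dd y} \<subseteq> {x\<in>J. eF \<le> rp x \<and> t * k - 1 \<le> G x \<and> G x < t * k}"
    proof
      fix y assume y: "y \<in> {y\<in>V. cc y = cc v \<and> dd v \<le> dd y}"
      have "t * k \<le> G y + 1" using ddt_2[of y t] y assms 2 by simp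
      thus "y \<in> {x\<in>J. eF \<le> rp x \<and> t * k - 1 \<le> G x \<and> G x < t * k}" using cct_cases[of y t] y assms by auto
    qed
    hence "card {y\<in>V. cc y = cc v \<and> dd v \<le> dd y} \<le> card {x\<in>J. eF \<le> rp x \<and> t * k - 1 \<le> G x \<and> G x < t * k}"
      by (rule card_mono[rotated]) (simp add: finJ)
    also have "\<dots> \<le> t * k - (t * k - 1)" by (rule card_G_range)
    finally show ?thesis using 2 k6 by linarith
  qed
qed

lemma chunk_size: "card {v\<in>V. cc v = t} \<le> k"
proof -
  consider "t = 0" | "t = 1" | "2 \<le> t" by linarith
  thus ?thesis
  proof cases
    case 1
    have "{v\<in>V. cc v = t} \<subseteq> F0 \<union> {x\<in>J. rp x < eF}" using cc0_cases 1 unfolding F0_def by auto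
    hence "card {v\<in>V. cc v = t} \<le> card (F0 \<union> {x\<in>J. rp x < eF})"
      by (rule card_mono[rotated]) (simp add: F0_def finV finJ)
    also have "\<dots> \<le> card F0 + card {x\<in>J. rp x < eF}" by (rule card_Un_le)
    also have "\<dots> \<le> k" using card_F0 card_EF eF_k by simp
    finally show ?thesis .
  next
    case 2 thus ?thesis using M1_card by simp
  next
    case 3
    have "{v\<in>V. cc v = t} \<subseteq> {x\<in>J. eF \<le> rp x \<and> (t - 1) * k \<le> G x \<and> G x < t * k}" using cct_cases 3 by auto
    hence "card {v\<in>V. cc v = t} \<le> card {x\<in>J. eF \<le> rp x \<and> (t - 1) * k \<le> G x \<and> G x < t * k}"
      by (rule card_mono[rotated]) (simp add: finJ)
    also have "\<dots> \<le> t * k - (t - 1) * k" by (rule card_G_range)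
    also have "\<dots> = k" using 3 by (simp add: diff_mult_distrib)
    finally show ?thesis .
  qed
qed

lemma cc_lt_N: assumes "k < card V" "v \<in> V" shows "cc v < (card V + k - 1) div k"
proof -
  define n where "n = card V"
  have nn: "n = m + 3 + cW + card J" using card_V card_F0 unfolding n_def cW_def by simp
  have N: "(n + k - 1) div k = (n - k - 1) div k + 2"
  proof -
    have "n + k - 1 = (n - k - 1) + k * 2" using assms(1) unfolding n_def by simp
    hence "(n + k - 1) div k = ((n - k - 1) + k * 2) div k" by (rule arg_cong)
    also have "\<dots> = 2 + (n - k - 1) div k" using k_pos by (intro div_mult_self2) simp
    finally show ?thesis by simp
  qed
  show ?thesis
  proof (cases "v \<in> J \<and> eF \<le> rp v")
    case True
    have "rp v < card J" using rp_lt True by simp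
    hence "G v \<le> n - k - 1" using True nn eF_k unfolding G_def by simp
    hence "G v div k \<le> (n - k - 1) div k" by (rule div_le_mono)
    thus ?thesis using ccJ_hi True N unfolding n_def by simp
  next
    case False
    have "cc v \<le> 1"
    proof (cases "v \<in> J")
      case True thus ?thesis using False cc_J by simp
    next
      case False thus ?thesis using cc_notJ assms(2) by simp
    qed
    thus ?thesis using N unfolding n_def by simp
  qed
qed

theorem main: "equitably_choosable V E k TYPE('c)"
  unfolding equitably_choosable_def
proof (intro allI impI)
  fix L :: "theta_vertex \<Rightarrow> 'c set"
  assume L: "k_assignment V k L"
  have Vne: "1 \<le> card V" using finV TU_in_V by (metis One_nat_def Suc_leI card_gt_0_iff empty_iff)
  show "\<exists>f. equitable_L_coloring V E k L f"
  proof (cases "card V \<le> k")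
    case True
    show ?thesis
    proof (rule greedy_equitable[where c = "\<lambda>_. 0" and N = 1 and dg = "\<lambda>v. card {x\<in>V. E v x \<and> (0::nat) < 0}"])
      show "finite V" by (rule finV)
      show "\<And>x y. E x y \<Longrightarrow> E y x" by (rule E_sym)
      show "\<And>x. \<not> E x x" by (rule E_irr)
      show "k_assignment V k L" by (rule L)
      show "\<And>v. v \<in> V \<Longrightarrow> (0::nat) < 1" by simp
      have "k div k \<le> (card V + k - 1) div k" using Vne by (intro div_le_mono) simp
      hence "(card V + k - 1) div k \<ge> 1" using k_pos by simp
      thus "1 \<le> nat \<lceil>real (card V) / real k\<rceil>" using ceil_div_nat[OF k_pos] by simp
      show "\<And>t. card {v\<in>V. (0::nat) = t} \<le> k" using True by (metis (no_types, lifting) card_mono finV mem_Collect_eq order_trans subsetI)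
      show "\<And>v. card {x\<in>V. E v x \<and> (0::nat) < 0} = card {x\<in>V. E v x \<and> (0::nat) < 0}" by simp
      show "\<And>v. v \<in> V \<Longrightarrow> 1 \<le> card {x\<in>V. E v x \<and> (0::nat) < 0} \<Longrightarrow> card {y\<in>V. 0 = 0 \<and> card {x\<in>V. E v x \<and> (0::nat) < 0} \<le> card {x\<in>V. E y x \<and> (0::nat) < 0}} + card {x\<in>V. E v x \<and> (0::nat) < 0} \<le> k"
        by simp
    qed
  next
    case False
    hence big: "k < card V" by simp
    show ?thesis
    proof (rule greedy_equitable[where c = cc and N = "(card V + k - 1) div k" and dg = dd])
      show "finite V" by (rule finV)
      show "\<And>x y. E x y \<Longrightarrow> E y x" by (rule E_sym)
      show "\<And>x. \<not> E x x" by (rule E_irr)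
      show "k_assignment V k L" by (rule L)
      show "\<And>v. v \<in> V \<Longrightarrow> cc v < (card V + k - 1) div k" using cc_lt_N[OF big] by simp
      show "(card V + k - 1) div k \<le> nat \<lceil>real (card V) / real k\<rceil>" using ceil_div_nat[OF k_pos] by simp
      show "\<And>t. card {v\<in>V. cc v = t} \<le> k" by (rule chunk_size)
      show "\<And>v. dd v = card {x\<in>V. E v x \<and> cc v < cc x}" by (simp add: dd_def)
      show "\<And>v. v \<in> V \<Longrightarrow> 1 \<le> dd v \<Longrightarrow> card {y\<in>V. cc y = cc v \<and> dd v \<le> dd y} + dd v \<le> k"
      proof -
        fix v assume v: "v \<in> V" "1 \<le> dd v"
        consider "cc v = 0" | "cc v = 1" | "2 \<le> cc v" by linarith
        thus "card {y\<in>V. cc y = cc v \<and> dd v \<le> dd y} + dd v \<le> k"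
        proof cases
          case 1 thus ?thesis using chunk0[OF v(1) _ v(2)] by simp
        next
          case 2 thus ?thesis using chunk1[OF v(1) _ v(2)] by simp
        next
          case 3 thus ?thesis using chunkt[OF v(1) refl 3 v(2)] by simp
        qed
      qed
    qed
  qed
qed

end

theorem theorem3p2:
  fixes ls :: "nat list" and k :: nat
  assumes "length ls \<ge> 3"
    and "sorted ls"
    and "ls ! 0 \<ge> 2"
    and "ls ! 1 \<ge> 4"
    and "k \<ge> length ls + 3"
  shows "equitably_choosable (theta_vertices ls) (square_adj (theta_adj ls)) k TYPE('c)"
  proof -
  have l4: "ls ! i \<ge> 4" if "1 \<le> i" "i < length ls" for i
    using assms(2,4) sorted_nth_mono[OF assms(2) that] by simp
  interpret th ls k using assms l4 by unfold_locales auto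
  show ?thesis by (rule main)
qed

end
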